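(* Let $(M,\circ,\mathrm{OR})$ be a free $\mathbb{D}$-module of rank 3 with scalar product and orientation. The Lie algebra $so(3,\mathbb{D})$ of $\circ$-antisymmetric $\mathbb{D}$-linear operators on $M$ (with the commutator bracket) is canonically isomorphic to the Lie algebra $(M,-\times)$ (bracket $[x,y]=-x\times y$) via $x\mapsto -x\times\cdot$, and to $se(3)$, the Lie algebra of screw fields on the Euclidean space $E$ with the Lie bracket of vector fields, via the map $\beta$ composed with this isomorphism.
   Context: $\mathbb{D}=\{a+\epsilon b: a,b\in\mathbb{R}\}$, $\epsilon^2=0$, $\mathfrak{Re},\mathfrak{Du}$ real and dual parts. Scalar product: symmetric $\mathbb{D}$-bilinear $\circ:M\times M\to\mathbb{D}$ with $\mathfrak{Re}(x\circ x)\ge0$, equality iff $x\in\epsilon M$. Orientation: one of the two classes of ordered bases, $\{b'_j=A_{jk}b_k\}\sim\{b_k\}$ iff $\det\mathfrak{Re}(A)>0$. Cross product: $x\times y=x^iy^j\epsilon_{ijk}m_k$ in any positive orthonormal basis $\{m_i\}$. $V=M/\epsilon M$ with quotient $\pi$ and inner product induced by $\mathfrak{Re}(\cdot\circ\cdot)$. $E$ is the set of real 3-dimensional subspaces $P\subset M$ with $\mathfrak{Du}(x\circ y)=0$ on $P$ and $P\cap\epsilon M=\{0\}$; it is a Euclidean affine space over $V$ with $B-A:=d^ke_k$ where $e^B_i=e^A_i+\epsilon\,\epsilon_{ijk}d^ke^A_j$, $\{e_i\}$ a positive orthonormal basis of $V$ and $e_i^P$ the unique lift of $e_i$ lying in $P$.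 A screw field on $E$ is a map $\mathcal{s}:E\to V$ with $\mathcal{s}(Q)-\mathcal{s}(P)=s\times(Q-P)$ for some $s\in V$; $\beta:M\to\{\text{screw fields}\}$ is $\beta(z)(A)=\mathcal{s}(A)$ where $z=a+\epsilon\mathcal{s}(A)$, $a\in A$. *)

theory Defs
  imports "HOL-Analysis.Analysis"
begin

datatype dual = Dual (dRe: real) (dDu: real)

instantiation dual :: comm_ring_1
begin
definition "0 = Dual 0 0"
definition "1 = Dual 1 0"
definition "x + y = Dual (dRe x + dRe y) (dDu x + dDu y)"
definition "x - y = Dual (dRe x - dRe y) (dDu x - dDu y)"
definition "- x = Dual (- dRe x) (- dDu x)"
definition "x * y = Dual (dRe x * dRe y) (dRe x * dDu y + dDu x * dRe y)"
instance
  by standard (auto simp: zero_dual_def one_dual_def plus_dual_def minus_dual_def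
      uminus_dual_def times_dual_def algebra_simps intro: dual.expand)
end

definition deps :: dual where "deps = Dual 0 1"
definition dreal :: "real \<Rightarrow> dual" where "dreal r = Dual r 0"

text \<open>Ordered bases are functions \<open>nat \<Rightarrow> 'm\<close>; only the values at 0,1,2 matter.\<close>

definition obasis :: "(dual \<Rightarrow> 'm::ab_group_add \<Rightarrow> 'm) \<Rightarrow> (nat \<Rightarrow> 'm) \<Rightarrow> bool" where
  "obasis sc b \<longleftrightarrow> inj_on b {..<3} \<and> \<not> module.dependent sc (b ` {..<3})
      \<and> module.span sc (b ` {..<3}) = UNIV"

definition scalar_product :: "(dual \<Rightarrow> 'm::ab_group_add \<Rightarrow> 'm) \<Rightarrow> ('m \<Rightarrow> 'm \<Rightarrow> dual) \<Rightarrow> bool" where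
  "scalar_product sc sp \<longleftrightarrow>
     (\<forall>x y. sp x y = sp y x) \<and>
     (\<forall>x y z. sp (x + y) z = sp x z + sp y z) \<and>
     (\<forall>a x y. sp (sc a x) y = a * sp x y) \<and>
     (\<forall>x. dRe (sp x x) \<ge> 0) \<and>
     (\<forall>x. dRe (sp x x) = 0 \<longleftrightarrow> x \<in> range (sc deps))"

definition det3 :: "(nat \<Rightarrow> nat \<Rightarrow> real) \<Rightarrow> real" where
  "det3 A = A 0 0 * (A 1 1 * A 2 2 - A 1 2 * A 2 1)
          - A 0 1 * (A 1 0 * A 2 2 - A 1 2 * A 2 0)
          + A 0 2 * (A 1 0 * A 2 1 - A 1 1 * A 2 0)"

definition same_orient :: "(dual \<Rightarrow> 'm::ab_group_add \<Rightarrow> 'm) \<Rightarrow> (nat \<Rightarrow> 'm) \<Rightarrow> (nat \<Rightarrow> 'm) \<Rightarrow> bool" where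
  "same_orient sc b b' \<longleftrightarrow> (\<exists>A. (\<forall>j<3. b' j = (\<Sum>k<3. sc (A j k) (b k)))
                                \<and> det3 (\<lambda>j k. dRe (A j k)) > 0)"

definition orientation :: "(dual \<Rightarrow> 'm::ab_group_add \<Rightarrow> 'm) \<Rightarrow> (nat \<Rightarrow> 'm) set \<Rightarrow> bool" where
  "orientation sc OR \<longleftrightarrow> (\<exists>b0. obasis sc b0 \<and> OR = {b. obasis sc b \<and> same_orient sc b0 b})"

definition dmod3 :: "(dual \<Rightarrow> 'm::ab_group_add \<Rightarrow> 'm) \<Rightarrow> ('m \<Rightarrow> 'm \<Rightarrow> dual) \<Rightarrow> (nat \<Rightarrow> 'm) set \<Rightarrow> bool" where
  "dmod3 sc sp OR \<longleftrightarrow> module sc \<and> (\<exists>b. obasis sc b) \<and> scalar_product sc sp \<and> orientation sc OR"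

definition orthonormal3 :: "('m \<Rightarrow> 'm \<Rightarrow> dual) \<Rightarrow> (nat \<Rightarrow> 'm) \<Rightarrow> bool" where
  "orthonormal3 sp m \<longleftrightarrow> (\<forall>i<3. \<forall>j<3. sp (m i) (m j) = (if i = j then 1 else 0))"

text \<open>A fixed positive orthonormal basis (the constructions below are independent of the choice).\<close>
definition ponb :: "('m \<Rightarrow> 'm \<Rightarrow> dual) \<Rightarrow> (nat \<Rightarrow> 'm) set \<Rightarrow> nat \<Rightarrow> 'm" where
  "ponb sp OR = (SOME m. m \<in> OR \<and> orthonormal3 sp m)"

definition levi :: "nat \<Rightarrow> nat \<Rightarrow> nat \<Rightarrow> real" where
  "levi i j k = (if (i,j,k) \<in> {(0,1,2),(1,2,0),(2,0,1)} then 1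
                 else if (i,j,k) \<in> {(0,2,1),(2,1,0),(1,0,2)} then -1 else 0)"

definition dcross :: "(dual \<Rightarrow> 'm::ab_group_add \<Rightarrow> 'm) \<Rightarrow> ('m \<Rightarrow> 'm \<Rightarrow> dual) \<Rightarrow> (nat \<Rightarrow> 'm) set
    \<Rightarrow> 'm \<Rightarrow> 'm \<Rightarrow> 'm" where
  "dcross sc sp OR x y = (let m = ponb sp OR in
     (\<Sum>i<3. \<Sum>j<3. \<Sum>k<3. sc (sp x (m i) * sp y (m j) * dreal (levi i j k)) (m k)))"

definition so3 :: "(dual \<Rightarrow> 'm::ab_group_add \<Rightarrow> 'm) \<Rightarrow> ('m \<Rightarrow> 'm \<Rightarrow> dual) \<Rightarrow> ('m \<Rightarrow> 'm) set" where
  "so3 sc sp = {T. (\<forall>a x y. T (sc a x + y) = sc a (T x) + T y) \<and> (\<forall>x y. sp (T x) y = - sp x (T y))}"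

definition op_comm :: "('m::ab_group_add \<Rightarrow> 'm) \<Rightarrow> ('m \<Rightarrow> 'm) \<Rightarrow> 'm \<Rightarrow> 'm" where
  "op_comm T S = (\<lambda>x. T (S x) - S (T x))"

definition adx :: "(dual \<Rightarrow> 'm::ab_group_add \<Rightarrow> 'm) \<Rightarrow> ('m \<Rightarrow> 'm \<Rightarrow> dual) \<Rightarrow> (nat \<Rightarrow> 'm) set
    \<Rightarrow> 'm \<Rightarrow> 'm \<Rightarrow> 'm" where
  "adx sc sp OR x = (\<lambda>y. - dcross sc sp OR x y)"

text \<open>Elements of V are the cosets \<open>x + \<epsilon>M\<close>.\<close>

definition qproj :: "(dual \<Rightarrow> 'm::ab_group_add \<Rightarrow> 'm) \<Rightarrow> 'm \<Rightarrow> 'm set" where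
  "qproj sc x = {y. y - x \<in> range (sc deps)}"

definition Vsp :: "(dual \<Rightarrow> 'm::ab_group_add \<Rightarrow> 'm) \<Rightarrow> 'm set set" where
  "Vsp sc = range (qproj sc)"

definition rep :: "'m set \<Rightarrow> 'm" where "rep u = (SOME x. x \<in> u)"

definition vadd :: "(dual \<Rightarrow> 'm::ab_group_add \<Rightarrow> 'm) \<Rightarrow> 'm set \<Rightarrow> 'm set \<Rightarrow> 'm set" where
  "vadd sc u v = qproj sc (rep u + rep v)"
definition vsub :: "(dual \<Rightarrow> 'm::ab_group_add \<Rightarrow> 'm) \<Rightarrow> 'm set \<Rightarrow> 'm set \<Rightarrow> 'm set" where
  "vsub sc u v = qproj sc (rep u - rep v)"
definition vscale :: "(dual \<Rightarrow> 'm::ab_group_add \<Rightarrow> 'm) \<Rightarrow> real \<Rightarrow> 'm set \<Rightarrow> 'm set" where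
  "vscale sc r u = qproj sc (sc (dreal r) (rep u))"
definition vinner :: "('m \<Rightarrow> 'm \<Rightarrow> dual) \<Rightarrow> 'm set \<Rightarrow> 'm set \<Rightarrow> real" where
  "vinner sp u v = dRe (sp (rep u) (rep v))"
definition vcross :: "(dual \<Rightarrow> 'm::ab_group_add \<Rightarrow> 'm) \<Rightarrow> ('m \<Rightarrow> 'm \<Rightarrow> dual) \<Rightarrow> (nat \<Rightarrow> 'm) set
    \<Rightarrow> 'm set \<Rightarrow> 'm set \<Rightarrow> 'm set" where
  "vcross sc sp OR u v = qproj sc (dcross sc sp OR (rep u) (rep v))"

definition ebas :: "(dual \<Rightarrow> 'm::ab_group_add \<Rightarrow> 'm) \<Rightarrow> ('m \<Rightarrow> 'm \<Rightarrow> dual) \<Rightarrow> (nat \<Rightarrow> 'm) set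
    \<Rightarrow> nat \<Rightarrow> 'm set" where
  "ebas sc sp OR i = qproj sc (ponb sp OR i)"

definition vlin :: "(dual \<Rightarrow> 'm::ab_group_add \<Rightarrow> 'm) \<Rightarrow> ('m \<Rightarrow> 'm \<Rightarrow> dual) \<Rightarrow> (nat \<Rightarrow> 'm) set
    \<Rightarrow> (nat \<Rightarrow> real) \<Rightarrow> 'm set" where
  "vlin sc sp OR c = qproj sc (\<Sum>k<3. sc (dreal (c k)) (ponb sp OR k))"

definition rscale :: "(dual \<Rightarrow> 'm::ab_group_add \<Rightarrow> 'm) \<Rightarrow> real \<Rightarrow> 'm \<Rightarrow> 'm" where
  "rscale sc r x = sc (dreal r) x"

definition Esp :: "(dual \<Rightarrow> 'm::ab_group_add \<Rightarrow> 'm) \<Rightarrow> ('m \<Rightarrow> 'm \<Rightarrow> dual) \<Rightarrow> 'm set set" where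
  "Esp sc sp = {P. module.subspace (rscale sc) P \<and> vector_space.dim (rscale sc) P = 3
      \<and> (\<forall>x\<in>P. \<forall>y\<in>P. dDu (sp x y) = 0) \<and> P \<inter> range (sc deps) = {0}}"

definition lift :: "(dual \<Rightarrow> 'm::ab_group_add \<Rightarrow> 'm) \<Rightarrow> 'm set \<Rightarrow> 'm set \<Rightarrow> 'm" where
  "lift sc P v = (THE x. x \<in> P \<and> qproj sc x = v)"

text \<open>\<open>B - A := d\<^sup>k e\<^sub>k\<close> where \<open>e\<^sup>B\<^sub>i = e\<^sup>A\<^sub>i + \<epsilon> \<epsilon>\<^sub>i\<^sub>j\<^sub>k d\<^sup>k e\<^sup>A\<^sub>j\<close>.\<close>
definition Ediff :: "(dual \<Rightarrow> 'm::ab_group_add \<Rightarrow> 'm) \<Rightarrow> ('m \<Rightarrow> 'm \<Rightarrow> dual) \<Rightarrow> (nat \<Rightarrow> 'm) set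
    \<Rightarrow> 'm set \<Rightarrow> 'm set \<Rightarrow> 'm set" where
  "Ediff sc sp OR B A = vlin sc sp OR (THE d. (\<forall>k\<ge>3. d k = 0) \<and>
      (\<forall>i<3. lift sc B (ebas sc sp OR i) = lift sc A (ebas sc sp OR i)
         + (\<Sum>j<3. \<Sum>k<3. sc (deps * dreal (levi i j k * d k)) (lift sc A (ebas sc sp OR j)))))"

definition Eplus :: "(dual \<Rightarrow> 'm::ab_group_add \<Rightarrow> 'm) \<Rightarrow> ('m \<Rightarrow> 'm \<Rightarrow> dual) \<Rightarrow> (nat \<Rightarrow> 'm) set
    \<Rightarrow> 'm set \<Rightarrow> 'm set \<Rightarrow> 'm set" where
  "Eplus sc sp OR P v = (THE Q. Q \<in> Esp sc sp \<and> Ediff sc sp OR Q P = v)"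

text \<open>Vector fields on E are maps \<open>E \<rightarrow> V\<close>, taken to be \<open>undefined\<close> outside E.\<close>
definition se3 :: "(dual \<Rightarrow> 'm::ab_group_add \<Rightarrow> 'm) \<Rightarrow> ('m \<Rightarrow> 'm \<Rightarrow> dual) \<Rightarrow> (nat \<Rightarrow> 'm) set
    \<Rightarrow> ('m set \<Rightarrow> 'm set) set" where
  "se3 sc sp OR = {s. (\<forall>P. P \<notin> Esp sc sp \<longrightarrow> s P = undefined) \<and> (\<forall>P\<in>Esp sc sp. s P \<in> Vsp sc) \<and>
      (\<exists>w\<in>Vsp sc. \<forall>P\<in>Esp sc sp. \<forall>Q\<in>Esp sc sp.
          vsub sc (s Q) (s P) = vcross sc sp OR w (Ediff sc sp OR Q P))}"

definition beta :: "(dual \<Rightarrow> 'm::ab_group_add \<Rightarrow> 'm) \<Rightarrow> ('m \<Rightarrow> 'm \<Rightarrow> dual) \<Rightarrow> 'm \<Rightarrow> 'm set \<Rightarrow> 'm set" where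
  "beta sc sp z A = (if A \<in> Esp sc sp then
      (THE v. v \<in> Vsp sc \<and> (\<exists>a\<in>A. \<exists>y. qproj sc y = v \<and> z = a + sc deps y)) else undefined)"

text \<open>Directional derivative \<open>(D\<^sub>v Y)(P) = d/dt|\<^sub>t\<^sub>=\<^sub>0 Y(P + t v)\<close>, computed in the coordinates of the
  orthonormal basis \<open>e\<close> of V.\<close>
definition vderiv :: "(dual \<Rightarrow> 'm::ab_group_add \<Rightarrow> 'm) \<Rightarrow> ('m \<Rightarrow> 'm \<Rightarrow> dual) \<Rightarrow> (nat \<Rightarrow> 'm) set
    \<Rightarrow> ('m set \<Rightarrow> 'm set) \<Rightarrow> 'm set \<Rightarrow> 'm set \<Rightarrow> 'm set" where
  "vderiv sc sp OR Y P v = vlin sc sp OR (\<lambda>k.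
      deriv (\<lambda>t. vinner sp (Y (Eplus sc sp OR P (vscale sc t v))) (ebas sc sp OR k)) 0)"

definition vf_bracket :: "(dual \<Rightarrow> 'm::ab_group_add \<Rightarrow> 'm) \<Rightarrow> ('m \<Rightarrow> 'm \<Rightarrow> dual) \<Rightarrow> (nat \<Rightarrow> 'm) set
    \<Rightarrow> ('m set \<Rightarrow> 'm set) \<Rightarrow> ('m set \<Rightarrow> 'm set) \<Rightarrow> 'm set \<Rightarrow> 'm set" where
  "vf_bracket sc sp OR X Y = (\<lambda>P. if P \<in> Esp sc sp then
      vsub sc (vderiv sc sp OR Y P (X P)) (vderiv sc sp OR X P (Y P)) else undefined)"

end

theory Submission imports Defs begin

section \<open>Dual number basics\<close>

lemma dual_eq_iff: "x = y \<longleftrightarrow> dRe x = dRe y \<and> dDu x = dDu y"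
  by (cases x; cases y) auto

lemma dual_simps[simp]:
  "dRe (x + y) = dRe x + dRe y" "dDu (x + y) = dDu x + dDu y"
  "dRe (x - y) = dRe x - dRe y" "dDu (x - y) = dDu x - dDu y"
  "dRe (- x) = - dRe x" "dDu (- x) = - dDu x"
  "dRe (x * y) = dRe x * dRe y" "dDu (x * y) = dRe x * dDu y + dDu x * dRe y"
  "dRe 0 = 0" "dDu 0 = 0" "dRe 1 = 1" "dDu 1 = 0"
  "dRe deps = 0" "dDu deps = 1" "dRe (dreal r) = r" "dDu (dreal r) = 0"
  by (simp_all add: plus_dual_def minus_dual_def uminus_dual_def times_dual_def
      zero_dual_def one_dual_def deps_def dreal_def)

lemma dRe_sum: "dRe (sum f A) = (\<Sum>a\<in>A. dRe (f a))"
  by (induction A rule: infinite_finite_induct) auto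
lemma dDu_sum: "dDu (sum f A) = (\<Sum>a\<in>A. dDu (f a))"
  by (induction A rule: infinite_finite_induct) auto

lemma sum3: "(\<Sum>k<3. f k) = f 0 + f 1 + f (2::nat)"
  by (simp add: numeral_3_eq_3 numeral_2_eq_2 lessThan_Suc add_ac)

lemma all3: "(\<forall>k<3. P k) \<longleftrightarrow> P 0 \<and> P 1 \<and> P (2::nat)"
  by (auto simp: numeral_3_eq_3 numeral_2_eq_2 less_Suc_eq)

lemma levi_vals[simp]:
  "levi 0 1 2 = 1" "levi 1 2 0 = 1" "levi 2 0 1 = 1"
  "levi 0 2 1 = -1" "levi 2 1 0 = -1" "levi 1 0 2 = -1"
  "levi 0 0 k = 0" "levi 1 1 k = 0" "levi 2 2 k = 0"
  "levi i 0 0 = 0" "levi i 1 1 = 0" "levi i 2 2 = 0"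
  "levi 0 j 0 = 0" "levi 1 j 1 = 0" "levi 2 j 2 = 0"
  by (auto simp: levi_def)

definition dinv :: "dual \<Rightarrow> dual" where
  "dinv a = Dual (1 / dRe a) (- dDu a / (dRe a)^2)"

lemma dinv_mult: "dRe a \<noteq> 0 \<Longrightarrow> dinv a * a = 1"
  by (simp add: dual_eq_iff dinv_def power2_eq_square field_simps)

definition isq :: "dual \<Rightarrow> dual" where
  "isq a = Dual (1 / sqrt (dRe a)) (- dDu a / (2 * dRe a * sqrt (dRe a)))"

lemma isq_prop: "dRe a > 0 \<Longrightarrow> isq a * isq a * a = 1"
  apply (simp add: dual_eq_iff isq_def)

  done

lemma isq_pos: "dRe a > 0 \<Longrightarrow> dRe (isq a) > 0"
  by (simp add: isq_def)

lemma deps_sq: "deps * deps = 0"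
  by (simp add: dual_eq_iff)

lemma lt3: "(k::nat) < 3 \<Longrightarrow> k = 0 \<or> k = 1 \<or> k = 2"
  by auto

lemma less3_cases: "(k::nat) < 3 \<Longrightarrow> (k = 0 \<Longrightarrow> P) \<Longrightarrow> (k = 1 \<Longrightarrow> P) \<Longrightarrow> (k = 2 \<Longrightarrow> P) \<Longrightarrow> P"
  by (auto dest!: lt3)

locale D3 =
  fixes sc :: "dual \<Rightarrow> 'm::ab_group_add \<Rightarrow> 'm" and sp :: "'m \<Rightarrow> 'm \<Rightarrow> dual"
    and OR :: "(nat \<Rightarrow> 'm) set"
  assumes dm: "dmod3 sc sp OR"
begin

lemma modsc: "module sc" using dm by (simp add: dmod3_def)

sublocale M: module sc by (rule modsc)

lemma spP: "scalar_product sc sp" using dm by (simp add: dmod3_def)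

lemma sp_sym: "sp x y = sp y x" using spP unfolding scalar_product_def by blast
lemma sp_add1: "sp (x + y) z = sp x z + sp y z" using spP unfolding scalar_product_def by blast
lemma sp_sc1: "sp (sc a x) y = a * sp x y" using spP unfolding scalar_product_def by blast
lemma sp_pos: "dRe (sp x x) \<ge> 0" using spP unfolding scalar_product_def by blast
lemma sp_zero_iff: "dRe (sp x x) = 0 \<longleftrightarrow> x \<in> range (sc deps)"
  using spP unfolding scalar_product_def by blast
lemma sp_add2: "sp z (x + y) = sp z x + sp z y" by (simp only: sp_sym[of z] sp_add1)
lemma sp_sc2: "sp y (sc a x) = a * sp y x" by (simp only: sp_sym[of y] sp_sc1)
lemma sp_01: "sp 0 y = 0" using sp_sc1[of 0 y y] by simp
lemma sp_02: "sp y 0 = 0" by (simp only: sp_sym[of y] sp_01)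
lemma sp_neg1: "sp (- x) y = - sp x y"
  using sp_sc1[of "-1" x y] by simp
lemma sp_neg2: "sp y (- x) = - sp y x" by (simp only: sp_sym[of y] sp_neg1)
lemma sp_diff1: "sp (x - y) z = sp x z - sp y z"
  using sp_add1[of x "-y" z] by (simp add: sp_neg1)
lemma sp_diff2: "sp z (x - y) = sp z x - sp z y"
  using sp_add2[of z x "-y"] by (simp add: sp_neg2)
lemma sp_sum1: "sp (sum f A) y = (\<Sum>a\<in>A. sp (f a) y)"
  by (induction A rule: infinite_finite_induct) (auto simp: sp_01 sp_add1)
lemma sp_sum2: "sp y (sum f A) = (\<Sum>a\<in>A. sp y (f a))"
  by (induction A rule: infinite_finite_induct) (auto simp: sp_02 sp_add2)

lemmas sp_simps = sp_add1 sp_add2 sp_sc1 sp_sc2 sp_01 sp_02 sp_neg1 sp_neg2 sp_diff1 sp_diff2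
  sp_sum1 sp_sum2

definition lin :: "(nat \<Rightarrow> 'm) \<Rightarrow> (nat \<Rightarrow> dual) \<Rightarrow> 'm" where
  "lin b c = (\<Sum>k<3. sc (c k) (b k))"

lemma lin_add: "lin b c + lin b d = lin b (\<lambda>k. c k + d k)"
  by (simp add: lin_def sum.distrib[symmetric] M.scale_left_distrib)
lemma lin_diff: "lin b c - lin b d = lin b (\<lambda>k. c k - d k)"
  by (simp add: lin_def sum_subtractf[symmetric] M.scale_left_diff_distrib)
lemma lin_sc: "sc a (lin b c) = lin b (\<lambda>k. a * c k)"
  by (simp add: lin_def sum3 M.scale_right_distrib)
lemma lin_base: "i < 3 \<Longrightarrow> b i = lin b (\<lambda>k. if k = i then 1 else 0)"
  by (auto simp: lin_def sum3 dest!: lt3)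

lemma obasis_indep:
  assumes b: "obasis sc b" and z: "lin b c = 0" and k: "k < 3"
  shows "c k = 0"
proof -
  have inj: "inj_on b {..<3}" and ind: "\<not> M.dependent (b ` {..<3})"
    using b by (auto simp: obasis_def)
  define u where "u = (\<lambda>v. c (the_inv_into {..<3} b v))"
  have "(\<Sum>v\<in>b ` {..<3}. sc (u v) v) = (\<Sum>j<3. sc (u (b j)) (b j))"
    by (rule sum.reindex[OF inj, unfolded comp_def])
  also have "\<dots> = lin b c"
    unfolding lin_def u_def using the_inv_into_f_f[OF inj] by (intro sum.cong) auto
  finally have s: "(\<Sum>v\<in>b ` {..<3}. sc (u v) v) = 0" using z by simp
  have "\<forall>v\<in>b ` {..<3}. u v = 0"
    using ind s M.dependent_finite[of "b ` {..<3}"] by auto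
  then have "u (b k) = 0" using k by auto
  then show ?thesis using the_inv_into_f_f[OF inj] k by (simp add: u_def)
qed

lemma obasis_span:
  assumes b: "obasis sc b"
  shows "\<exists>c. x = lin b c"
proof -
  have inj: "inj_on b {..<3}" and sp: "M.span (b ` {..<3}) = UNIV"
    using b by (auto simp: obasis_def)
  then have "x \<in> range (\<lambda>u. \<Sum>v\<in>b ` {..<3}. sc (u v) v)"
    using M.span_finite[of "b ` {..<3}"] by auto
  then obtain u where "x = (\<Sum>v\<in>b ` {..<3}. sc (u v) v)" by auto
  also have "\<dots> = (\<Sum>j<3. sc (u (b j)) (b j))"
    by (rule sum.reindex[OF inj, unfolded comp_def])
  finally have "x = lin b (\<lambda>j. u (b j))" by (simp add: lin_def)
  then show ?thesis by blast
qed

lemma pos_lin: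
  assumes b: "obasis sc b" and i: "i < 3" and ci: "dRe (c i) \<noteq> 0"
  shows "dRe (sp (lin b c) (lin b c)) > 0"
proof (rule ccontr)
  assume "\<not> ?thesis"
  then have "dRe (sp (lin b c) (lin b c)) = 0" using sp_pos[of "lin b c"] by linarith
  then obtain y where y: "lin b c = sc deps y" using sp_zero_iff by auto
  have "lin b (\<lambda>k. deps * c k) = sc deps (lin b c)" by (simp add: lin_sc)
  also have "\<dots> = 0" by (simp add: y deps_sq)
  finally have "deps * c i = 0" using obasis_indep[OF b _ i] by blast
  then have "dRe (c i) = 0" by (simp add: dual_eq_iff)
  then show False using ci by simp
qed

lemma orth_lin:
  assumes o: "orthonormal3 sp n" and j: "j < 3"
  shows "sp (lin n c) (n j) = c j"
proof -
  have v: "sp (n i) (n j) = (if i = j then 1 else 0)" if "i < 3" for i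
    using o that j by (simp add: orthonormal3_def)
  have "sp (lin n c) (n j) = c 0 * sp (n 0) (n j) + c 1 * sp (n 1) (n j) + c 2 * sp (n 2) (n j)"
    by (simp add: lin_def sum3 sp_add1 sp_sc1)
  then show ?thesis using v[of 0] v[of 1] v[of 2] j by (auto dest!: lt3)
qed

lemma orth_indep:
  assumes o: "orthonormal3 sp n"
  shows "inj_on n {..<3}" "\<not> M.dependent (n ` {..<3})"
proof -
  show inj: "inj_on n {..<3}"
  proof (rule inj_onI)
    fix i j assume "i \<in> {..<3}" "j \<in> {..<3}" "n i = n j"
    then show "i = j" using o unfolding orthonormal3_def
      by (metis lessThan_iff zero_neq_one)
  qed
  show "\<not> M.dependent (n ` {..<3})"
  proof
    assume "M.dependent (n ` {..<3})"
    then obtain u where u: "\<exists>v\<in>n ` {..<3}. u v \<noteq> 0" "(\<Sum>v\<in>n ` {..<3}. sc (u v) v) = 0"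
      using M.dependent_finite[of "n ` {..<3}"] by auto
    have "(\<Sum>v\<in>n ` {..<3}. sc (u v) v) = (\<Sum>j<3. sc (u (n j)) (n j))"
      by (rule sum.reindex[OF inj, unfolded comp_def])
    then have z: "lin n (\<lambda>j. u (n j)) = 0" using u by (simp add: lin_def)
    from u obtain j where j: "j < 3" "u (n j) \<noteq> 0" by auto
    have "sp (lin n (\<lambda>j. u (n j))) (n j) = u (n j)" by (rule orth_lin[OF o j(1)])
    then show False using z j by (simp add: sp_01)
  qed
qed


lemma sc_dinv: "dRe a \<noteq> 0 \<Longrightarrow> sc (dinv a) (sc a x) = x"
  by (simp add: dinv_mult)

lemma exists_ponb: "\<exists>m. m \<in> OR \<and> orthonormal3 sp m"
proof -
  obtain b where b: "obasis sc b" and ORe: "OR = {b'. obasis sc b' \<and> same_orient sc b b'}"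
    using dm by (auto simp: dmod3_def orientation_def)
  have e0: "b 0 = lin b (\<lambda>k. if k = 0 then 1 else 0)" by (rule lin_base) simp
  have e1: "b 1 = lin b (\<lambda>k. if k = 1 then 1 else 0)" by (rule lin_base) simp
  have e2: "b 2 = lin b (\<lambda>k. if k = 2 then 1 else 0)" by (rule lin_base) simp
  define a0 where "a0 = isq (sp (b 0) (b 0))"
  define n0 where "n0 = sc a0 (b 0)"
  define \<beta> where "\<beta> = sp (b 1) n0"
  define u1 where "u1 = b 1 - sc \<beta> n0"
  define a1 where "a1 = isq (sp u1 u1)"
  define n1 where "n1 = sc a1 u1"
  define \<gamma> where "\<gamma> = sp (b 2) n0"
  define \<delta> where "\<delta> = sp (b 2) n1"
  define u2 where "u2 = b 2 - sc \<gamma> n0 - sc \<delta> n1"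
  define a2 where "a2 = isq (sp u2 u2)"
  define n2 where "n2 = sc a2 u2"
  have p0: "dRe (sp (b 0) (b 0)) > 0"
    unfolding e0 by (rule pos_lin[OF b, of 0]) auto
  have n0l: "n0 = lin b (\<lambda>k. a0 * (if k = 0 then 1 else 0))"
    unfolding n0_def by (subst e0) (simp only: lin_sc)
  have u1l: "u1 = lin b (\<lambda>k. (if k = 1 then 1 else 0) - \<beta> * (a0 * (if k = 0 then 1 else 0)))"
    unfolding u1_def by (subst e1, subst n0l) (simp only: lin_sc lin_diff)
  have p1: "dRe (sp u1 u1) > 0"
    unfolding u1l by (rule pos_lin[OF b, of 1]) auto
  have n1l: "n1 = lin b (\<lambda>k. a1 * ((if k = 1 then 1 else 0) - \<beta> * (a0 * (if k = 0 then 1 else 0))))"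
    unfolding n1_def by (subst u1l) (simp only: lin_sc)
  have u2l: "u2 = lin b (\<lambda>k. (if k = 2 then 1 else 0) - \<gamma> * (a0 * (if k = 0 then 1 else 0))
     - \<delta> * (a1 * ((if k = 1 then 1 else 0) - \<beta> * (a0 * (if k = 0 then 1 else 0)))))"
    unfolding u2_def by (subst e2, subst n0l, subst n1l) (simp only: lin_sc lin_diff)
  have p2: "dRe (sp u2 u2) > 0"
    unfolding u2l by (rule pos_lin[OF b, of 2]) auto
  have n2l: "n2 = lin b (\<lambda>k. a2 * ((if k = 2 then 1 else 0) - \<gamma> * (a0 * (if k = 0 then 1 else 0))
     - \<delta> * (a1 * ((if k = 1 then 1 else 0) - \<beta> * (a0 * (if k = 0 then 1 else 0))))))"
    unfolding n2_def by (subst u2l) (simp only: lin_sc)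
  have q0: "a0 * a0 * sp (b 0) (b 0) = 1" unfolding a0_def by (rule isq_prop[OF p0])
  have q1: "a1 * a1 * sp u1 u1 = 1" unfolding a1_def by (rule isq_prop[OF p1])
  have q2: "a2 * a2 * sp u2 u2 = 1" unfolding a2_def by (rule isq_prop[OF p2])
  have o00: "sp n0 n0 = 1" using q0 by (simp add: n0_def sp_sc1 sp_sc2 mult.assoc)
  have o10: "sp n1 n0 = 0"
    by (simp add: n1_def u1_def sp_sc1 sp_diff1 o00 \<beta>_def)
  have o11: "sp n1 n1 = 1" using q1 by (simp add: n1_def sp_sc1 sp_sc2 mult.assoc)
  have o20: "sp n2 n0 = 0"
    by (simp add: n2_def u2_def sp_sc1 sp_diff1 o00 o10 \<gamma>_def)
  have o21: "sp n2 n1 = 0"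
    using o10 by (simp add: n2_def u2_def sp_sc1 sp_diff1 o11 \<delta>_def sp_sym[of n0 n1])
  have o22: "sp n2 n2 = 1" using q2 by (simp add: n2_def sp_sc1 sp_sc2 mult.assoc)
  define n where "n = (\<lambda>j::nat. if j = 0 then n0 else if j = 1 then n1 else n2)"
  have on: "orthonormal3 sp n"
    unfolding orthonormal3_def n_def
    using o00 o10 o11 o20 o21 o22 sp_sym[of n0 n1] sp_sym[of n0 n2] sp_sym[of n1 n2]
    by (auto dest!: lt3)
  have ra0: "dRe a0 > 0" unfolding a0_def by (rule isq_pos[OF p0])
  have ra1: "dRe a1 > 0" unfolding a1_def by (rule isq_pos[OF p1])
  have ra2: "dRe a2 > 0" unfolding a2_def by (rule isq_pos[OF p2])
  have inS: "n j \<in> M.span (n ` {..<3})" if "j < 3" for j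
    using that by (intro M.span_base) auto
  have N0: "n0 \<in> M.span (n ` {..<3})" using inS[of 0] by (simp add: n_def)
  have N1: "n1 \<in> M.span (n ` {..<3})" using inS[of 1] by (simp add: n_def)
  have N2: "n2 \<in> M.span (n ` {..<3})" using inS[of 2] by (simp add: n_def)
  have B0: "b 0 = sc (dinv a0) n0" using ra0 by (simp add: n0_def dinv_mult)
  have B1: "b 1 = sc (dinv a1) n1 + sc \<beta> n0" using ra1 by (simp add: n1_def dinv_mult u1_def)
  have B2: "b 2 = sc (dinv a2) n2 + sc \<gamma> n0 + sc \<delta> n1" using ra2 by (simp add: n2_def dinv_mult u2_def)
  have "b 0 \<in> M.span (n ` {..<3})" "b 1 \<in> M.span (n ` {..<3})" "b 2 \<in> M.span (n ` {..<3})"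
    unfolding B0 B1 B2 using N0 N1 N2 by (simp_all add: M.span_add M.span_scale)
  then have "b j \<in> M.span (n ` {..<3})" if "j < 3" for j
    using that by (auto dest!: lt3)
  then have "M.span (b ` {..<3}) \<subseteq> M.span (n ` {..<3})"
    by (intro M.span_minimal) auto
  then have spn: "M.span (n ` {..<3}) = UNIV" using b by (auto simp: obasis_def)
  have obn: "obasis sc n" using orth_indep[OF on] spn by (simp add: obasis_def)
  define A :: "nat \<Rightarrow> nat \<Rightarrow> dual" where "A = (\<lambda>j::nat. if j = 0 then (\<lambda>k. a0 * (if k = 0 then 1 else 0))
     else if j = 1 then (\<lambda>k. a1 * ((if k = 1 then 1 else 0) - \<beta> * (a0 * (if k = 0 then 1 else 0))))
     else (\<lambda>k. a2 * ((if k = 2 then 1 else 0) - \<gamma> * (a0 * (if k = 0 then 1 else 0))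
     - \<delta> * (a1 * ((if k = 1 then 1 else 0) - \<beta> * (a0 * (if k = 0 then 1 else 0)))))))"
  have "\<forall>j<3. n j = (\<Sum>k<3. sc (A j k) (b k))"
    unfolding all3 by (simp add: n_def A_def n0l n1l n2l lin_def del: sum3)
  moreover have "det3 (\<lambda>j k. dRe (A j k)) > 0"
    using ra0 ra1 ra2 by (simp add: det3_def A_def)
  ultimately have "same_orient sc b n" unfolding same_orient_def by blast
  then have "n \<in> OR" using obn ORe by simp
  then show ?thesis using on by blast
qed

definition mb where "mb = ponb sp OR"

lemma mb_props: "mb \<in> OR" "orthonormal3 sp mb"
  using someI_ex[OF exists_ponb] by (auto simp: mb_def ponb_def)

lemma ob_mb: "obasis sc mb"
  using mb_props(1) dm by (auto simp: dmod3_def orientation_def)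

definition co :: "'m \<Rightarrow> nat \<Rightarrow> dual" where "co x k = sp x (mb k)"
definition rc :: "'m \<Rightarrow> nat \<Rightarrow> real" where "rc x k = dRe (co x k)"
definition dc :: "'m \<Rightarrow> nat \<Rightarrow> real" where "dc x k = dDu (co x k)"

lemma lin_cong: "(\<And>k. k < 3 \<Longrightarrow> c k = d k) \<Longrightarrow> lin b c = lin b d"
  by (simp add: lin_def)

lemma co_lin: "k < 3 \<Longrightarrow> co (lin mb c) k = c k"
  unfolding co_def by (rule orth_lin[OF mb_props(2)])

lemma expand: "x = lin mb (co x)"
proof -
  obtain c where c: "x = lin mb c" using obasis_span[OF ob_mb] by blast
  have "lin mb c = lin mb (co x)"
    by (rule lin_cong) (simp add: c co_lin)
  then show ?thesis using c by simp
qed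

lemma co_ext: "(\<And>k. k < 3 \<Longrightarrow> co x k = co y k) \<Longrightarrow> x = y"
  by (metis expand lin_cong)

lemma co_eq_iff: "x = y \<longleftrightarrow> (\<forall>k<3. co x k = co y k)"
  using co_ext by auto

lemma co_simps[simp]:
  "co (x + y) k = co x k + co y k" "co (sc a x) k = a * co x k" "co (- x) k = - co x k"
  "co (x - y) k = co x k - co y k" "co 0 k = 0" "co (sum f A) k = (\<Sum>a\<in>A. co (f a) k)"
  by (simp_all add: co_def sp_simps)

lemma co_mb: "j < 3 \<Longrightarrow> k < 3 \<Longrightarrow> co (mb j) k = (if j = k then 1 else 0)"
  using mb_props(2) by (simp add: co_def orthonormal3_def)

lemma parseval: "sp x y = (\<Sum>k<3. co x k * co y k)"
proof -
  have "sp x y = sp (lin mb (co x)) y" using expand by simp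
  also have "\<dots> = (\<Sum>k<3. co x k * co y k)"
    by (simp add: lin_def sp_simps co_def sp_sym[of y])
  finally show ?thesis .
qed

lemma dreal_simps[simp]: "dreal 0 = 0" "dreal 1 = 1" "dreal (- a) = - dreal a"
  "dreal (a + b) = dreal a + dreal b" "dreal (a * b) = dreal a * dreal b"
  "dreal (a - b) = dreal a - dreal b"
  by (simp_all add: dual_eq_iff)

end

definition dcrs :: "(nat \<Rightarrow> 'a::comm_ring_1) \<Rightarrow> (nat \<Rightarrow> 'a) \<Rightarrow> nat \<Rightarrow> 'a" where
  "dcrs a b k = (if k = 0 then a 1 * b 2 - a 2 * b 1 else if k = 1 then a 2 * b 0 - a 0 * b 2
     else a 0 * b 1 - a 1 * b 0)"

lemma dcrs_simps[simp]: "dcrs a b 0 = a 1 * b 2 - a 2 * b 1" "dcrs a b 1 = a 2 * b 0 - a 0 * b 2"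
  "dcrs a b 2 = a 0 * b 1 - a 1 * b 0" "dcrs a b (Suc 0) = a 2 * b 0 - a 0 * b 2"
  by (simp_all add: dcrs_def)

context D3
begin

lemma co_dcross:
  assumes k: "k < 3"
  shows "co (dcross sc sp OR x y) k = dcrs (co x) (co y) k"
proof -
  have "dcross sc sp OR x y = (\<Sum>i<3. \<Sum>j<3. lin mb (\<lambda>l. co x i * co y j * dreal (levi i j l)))"
    by (simp add: dcross_def lin_def mb_def co_def Let_def)
  then have "co (dcross sc sp OR x y) k = (\<Sum>i<3. \<Sum>j<3. co x i * co y j * dreal (levi i j k))"
    using k by (simp add: co_lin del: co_simps(2))
  also have "\<dots> = dcrs (co x) (co y) k"
    using k by (auto simp: sum3 levi_def dest!: lt3)
  finally show ?thesis .
qed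

lemma rc_simps[simp]:
  "rc (x + y) k = rc x k + rc y k" "rc (- x) k = - rc x k"
  "rc (x - y) k = rc x k - rc y k" "rc 0 k = 0"
  "dc (x + y) k = dc x k + dc y k" "dc (- x) k = - dc x k"
  "dc (x - y) k = dc x k - dc y k" "dc 0 k = 0"
  by (simp_all add: rc_def dc_def)

lemma rc_sc: "rc (sc a x) k = dRe a * rc x k" "dc (sc a x) k = dRe a * dc x k + dDu a * rc x k"
  by (simp_all add: rc_def dc_def)

lemma co_split: "co x k = Dual (rc x k) (dc x k)"
  by (simp add: rc_def dc_def)

lemma epsM_iff: "x \<in> range (sc deps) \<longleftrightarrow> (\<forall>k<3. rc x k = 0)"
proof
  assume "x \<in> range (sc deps)"
  then obtain y where "x = sc deps y" by auto
  then show "\<forall>k<3. rc x k = 0" by (simp add: rc_sc)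
next
  assume h: "\<forall>k<3. rc x k = 0"
  have "x = sc deps (lin mb (\<lambda>k. dreal (dc x k)))"
    by (rule co_ext) (use h in \<open>simp add: dual_eq_iff rc_def dc_def co_lin\<close>)
  then show "x \<in> range (sc deps)" by blast
qed

definition vmk :: "(nat \<Rightarrow> real) \<Rightarrow> 'm set" where
  "vmk r = qproj sc (lin mb (\<lambda>k. dreal (r k)))"
definition vco :: "'m set \<Rightarrow> nat \<Rightarrow> real" where
  "vco u k = rc (rep u) k"

lemma qproj_eq_iff: "qproj sc x = qproj sc y \<longleftrightarrow> (\<forall>k<3. rc x k = rc y k)"
proof
  assume "qproj sc x = qproj sc y"
  then have "y \<in> qproj sc x" by (auto simp: qproj_def intro: image_eqI[of _ _ 0])
  then show "\<forall>k<3. rc x k = rc y k" by (auto simp: qproj_def epsM_iff)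
next
  assume h: "\<forall>k<3. rc x k = rc y k"
  then show "qproj sc x = qproj sc y" by (auto simp: qproj_def epsM_iff)
qed

lemma in_qproj: "x \<in> qproj sc x"
  by (auto simp: qproj_def intro: image_eqI[of _ _ 0])

lemma rc_rep_qproj: "k < 3 \<Longrightarrow> rc (rep (qproj sc x)) k = rc x k"
proof -
  assume k: "k < 3"
  have "rep (qproj sc x) \<in> qproj sc x" unfolding rep_def using in_qproj by (rule someI)
  then show ?thesis using k by (auto simp: qproj_def epsM_iff)
qed

lemma rc_lin: "k < 3 \<Longrightarrow> rc (lin mb (\<lambda>k. dreal (r k))) k = r k"
  by (simp add: rc_def co_lin)

lemma qproj_vmk: "qproj sc x = vmk (rc x)"
  unfolding vmk_def qproj_eq_iff by (simp add: rc_lin)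

lemma vco_vmk: "k < 3 \<Longrightarrow> vco (vmk r) k = r k"
  by (simp add: vco_def vmk_def rc_rep_qproj rc_lin)

lemma vco_qproj: "k < 3 \<Longrightarrow> vco (qproj sc x) k = rc x k"
  by (simp add: vco_def rc_rep_qproj)

lemma vmk_eq_iff: "vmk r = vmk s \<longleftrightarrow> (\<forall>k<3. r k = s k)"
  unfolding vmk_def qproj_eq_iff by (simp add: rc_lin)

lemma vmk_cong: "(\<And>k. k < 3 \<Longrightarrow> r k = s k) \<Longrightarrow> vmk r = vmk s"
  by (simp add: vmk_eq_iff)

lemma vmk_Vsp: "vmk r \<in> Vsp sc"
  by (simp add: vmk_def Vsp_def)

lemma Vsp_vmk: "u \<in> Vsp sc \<Longrightarrow> u = vmk (vco u)"
proof -
  assume "u \<in> Vsp sc"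
  then obtain x where "u = vmk (rc x)" by (auto simp: Vsp_def qproj_vmk)
  then show ?thesis by (simp add: vmk_eq_iff vco_vmk)
qed

lemma vco_fun: "vco u = rc (rep u)"
  by (simp add: fun_eq_iff vco_def)

lemma vadd_eq: "vadd sc u v = vmk (\<lambda>k. vco u k + vco v k)"
  by (simp add: vadd_def qproj_vmk vco_def vmk_eq_iff)
lemma vsub_eq: "vsub sc u v = vmk (\<lambda>k. vco u k - vco v k)"
  by (simp add: vsub_def qproj_vmk vco_def vmk_eq_iff)
lemma vscale_eq: "vscale sc t u = vmk (\<lambda>k. t * vco u k)"
  by (simp add: vscale_def qproj_vmk vco_def rc_sc vmk_eq_iff)
lemma vlin_eq: "vlin sc sp OR c = vmk c"
  by (simp add: vlin_def vmk_def lin_def mb_def)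
lemma ebas_eq: "i < 3 \<Longrightarrow> ebas sc sp OR i = vmk (\<lambda>k. if k = i then 1 else 0)"
  unfolding ebas_def mb_def[symmetric] qproj_vmk
  by (rule vmk_cong) (simp add: rc_def co_mb)
lemma vinner_eq: "vinner sp u v = (\<Sum>k<3. vco u k * vco v k)"
  by (simp add: vinner_def parseval dRe_sum vco_def rc_def)

end

definition crs :: "(nat \<Rightarrow> real) \<Rightarrow> (nat \<Rightarrow> real) \<Rightarrow> nat \<Rightarrow> real" where
  "crs a b k = (if k = 0 then a 1 * b 2 - a 2 * b 1 else if k = 1 then a 2 * b 0 - a 0 * b 2
     else a 0 * b 1 - a 1 * b 0)"

lemma crs_simps[simp]: "crs a b 0 = a 1 * b 2 - a 2 * b 1" "crs a b 1 = a 2 * b 0 - a 0 * b 2"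
  "crs a b 2 = a 0 * b 1 - a 1 * b 0" "crs a b (Suc 0) = a 2 * b 0 - a 0 * b 2"
  by (simp_all add: crs_def)

context D3
begin

lemma rc_dcross: "k < 3 \<Longrightarrow> rc (dcross sc sp OR x y) k = crs (rc x) (rc y) k"
  by (auto simp: rc_def co_dcross dest!: lt3)

lemma dc_dcross: "k < 3 \<Longrightarrow> dc (dcross sc sp OR x y) k = crs (dc x) (rc y) k + crs (rc x) (dc y) k"
  by (auto simp: rc_def dc_def co_dcross algebra_simps dest!: lt3)

lemma vcross_eq: "vcross sc sp OR u v = vmk (crs (vco u) (vco v))"
  unfolding vcross_def qproj_vmk by (rule vmk_cong) (simp add: rc_dcross vco_fun)


lemma vsR: "vector_space (rscale sc)"
  by unfold_locales
    (simp_all add: rscale_def M.scale_right_distrib M.scale_left_distrib[symmetric])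

sublocale R: vector_space "rscale sc" by (rule vsR)

lemma rc_rscale[simp]: "rc (rscale sc r x) k = r * rc x k" "dc (rscale sc r x) k = r * dc x k"
  by (simp_all add: rscale_def rc_sc)

definition Pp :: "(nat \<Rightarrow> real) \<Rightarrow> 'm set" where
  "Pp p = {x. \<forall>j<3. dc x j = crs p (rc x) j}"

definition fr :: "(nat \<Rightarrow> real) \<Rightarrow> (nat \<Rightarrow> real) \<Rightarrow> 'm" where
  "fr p r = lin mb (\<lambda>j. Dual (r j) (crs p r j))"

lemma rc_fr: "k < 3 \<Longrightarrow> rc (fr p r) k = r k" and dc_fr: "k < 3 \<Longrightarrow> dc (fr p r) k = crs p r k"
  by (simp_all add: fr_def rc_def dc_def co_lin)

lemma crs_cong: "(\<And>k. k < 3 \<Longrightarrow> a k = b k) \<Longrightarrow> (\<And>k. k < 3 \<Longrightarrow> c k = d k) \<Longrightarrow> j < 3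
  \<Longrightarrow> crs a c j = crs b d j"
  by (auto simp: crs_def)

lemma fr_in: "fr p r \<in> Pp p"
  unfolding Pp_def by (auto simp: dc_fr rc_fr intro!: crs_cong)

lemma rc_dc_ext: "(\<And>k. k < 3 \<Longrightarrow> rc x k = rc y k) \<Longrightarrow> (\<And>k. k < 3 \<Longrightarrow> dc x k = dc y k) \<Longrightarrow> x = y"
  by (rule co_ext) (simp add: dual_eq_iff rc_def dc_def)

lemma Pp_fr: "x \<in> Pp p \<Longrightarrow> x = fr p (rc x)"
  by (rule rc_dc_ext) (auto simp: Pp_def rc_fr dc_fr)

lemma crs_lin2: "crs p (\<lambda>k. a * x k + b * y k) j = a * crs p x j + b * crs p y j"
  by (simp add: crs_def algebra_simps)

lemma rc_fun_add: "rc (x + y) = (\<lambda>k. rc x k + rc y k)" by (simp add: fun_eq_iff)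
lemma rc_fun_scale: "rc (rscale sc c x) = (\<lambda>k. c * rc x k)" by (simp add: fun_eq_iff)

lemma Pp_subspace: "R.subspace (Pp p)"
  unfolding R.subspace_def
proof (intro conjI ballI allI)
  show "0 \<in> Pp p" by (simp add: Pp_def crs_def)
next
  fix x y assume "x \<in> Pp p" "y \<in> Pp p"
  then show "x + y \<in> Pp p"
    using crs_lin2[of p 1 "rc x" 1 "rc y"] by (auto simp: Pp_def rc_fun_add)
next
  fix c x assume "x \<in> Pp p"
  then show "rscale sc c x \<in> Pp p"
    using crs_lin2[of p c "rc x" 0 "rc x"] by (auto simp: Pp_def rc_fun_scale)
qed

definition ee :: "nat \<Rightarrow> nat \<Rightarrow> real" where "ee i = (\<lambda>k. if k = i then 1 else 0)"

lemma Pp_span3: "x \<in> Pp p \<Longrightarrow>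
   x = rscale sc (rc x 0) (fr p (ee 0)) + rscale sc (rc x 1) (fr p (ee 1)) + rscale sc (rc x 2) (fr p (ee 2))"
  apply (rule rc_dc_ext)
   apply (auto simp: rc_fr dc_fr ee_def dest!: lt3)[1]
  apply (auto simp: rc_fr dc_fr ee_def Pp_def crs_def dest!: lt3)
  done

lemma fr_ee_distinct: "fr p (ee 0) \<noteq> fr p (ee 1)" "fr p (ee 0) \<noteq> fr p (ee 2)" "fr p (ee 1) \<noteq> fr p (ee 2)"
  using rc_fr[of 0 p "ee 0"] rc_fr[of 0 p "ee 1"] rc_fr[of 0 p "ee 2"] rc_fr[of 1 p "ee 1"] rc_fr[of 1 p "ee 2"]
  by (auto simp: ee_def)

lemma Pp_dim: "R.dim (Pp p) = 3"
proof -
  define B where "B = {fr p (ee 0), fr p (ee 1), fr p (ee 2)}"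
  have cB: "card B = 3" using fr_ee_distinct by (simp add: B_def)
  have BP: "B \<subseteq> Pp p" using fr_in by (simp add: B_def)
  have sp: "Pp p \<subseteq> R.span B"
  proof
    fix x assume "x \<in> Pp p"
    then have "x = rscale sc (rc x 0) (fr p (ee 0)) + rscale sc (rc x 1) (fr p (ee 1)) + rscale sc (rc x 2) (fr p (ee 2))"
      by (rule Pp_span3)
    also have "\<dots> \<in> R.span B"
      by (intro R.span_add R.span_scale R.span_base) (auto simp: B_def)
    finally show "x \<in> R.span B" .
  qed
  have ind: "\<not> R.dependent B"
  proof
    assume "R.dependent B"
    then obtain u where u: "\<exists>v\<in>B. u v \<noteq> 0" "(\<Sum>v\<in>B. rscale sc (u v) v) = 0"
      using R.dependent_finite[of B] by (auto simp: B_def)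
    have s: "(\<Sum>v\<in>B. rscale sc (u v) v) = rscale sc (u (fr p (ee 0))) (fr p (ee 0))
       + rscale sc (u (fr p (ee 1))) (fr p (ee 1)) + rscale sc (u (fr p (ee 2))) (fr p (ee 2))"
      using fr_ee_distinct by (simp add: B_def add_ac)
    have hk: "rc (\<Sum>v\<in>B. rscale sc (u v) v) k = 0" for k using u(2) by simp
    have h: "u (fr p (ee 0)) * ee 0 k + u (fr p (ee 1)) * ee 1 k + u (fr p (ee 2)) * ee 2 k = 0"
      if "k < 3" for k
      using that hk[of k] unfolding s by (simp add: rc_fr)
    have "u (fr p (ee 0)) = 0" "u (fr p (ee 1)) = 0" "u (fr p (ee 2)) = 0"
      using h[of 0] h[of 1] h[of 2] by (simp_all add: ee_def)
    then have "u (fr p (ee k)) = 0" if "k < 3" for k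
      using that by (auto dest!: lt3)
    then show False using u(1) by (auto simp: B_def)
  qed
  show ?thesis by (rule R.dim_unique[OF BP sp ind cB])
qed

lemma Pp_Du: "x \<in> Pp p \<Longrightarrow> y \<in> Pp p \<Longrightarrow> dDu (sp x y) = 0"
proof -
  assume x: "x \<in> Pp p" and y: "y \<in> Pp p"
  have e: "dc x 0 = crs p (rc x) 0" "dc x (Suc 0) = crs p (rc x) (Suc 0)" "dc x 2 = crs p (rc x) 2"
       "dc y 0 = crs p (rc y) 0" "dc y (Suc 0) = crs p (rc y) (Suc 0)" "dc y 2 = crs p (rc y) 2"
    using x y by (auto simp: Pp_def simp del: crs_simps)
  show ?thesis
    by (simp add: parseval sum3 co_split e algebra_simps)
qed

lemma Pp_eps: "Pp p \<inter> range (sc deps) = {0}"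
proof (intro equalityI subsetI)
  fix x :: 'm assume "x \<in> Pp p \<inter> range (sc deps)"
  then have r: "\<forall>k<3. rc x k = 0" and "x \<in> Pp p" by (auto simp: epsM_iff)
  then have "\<forall>k<3. dc x k = 0" by (auto simp: Pp_def crs_def)
  then show "x \<in> {0}" using r by (auto intro: rc_dc_ext)
next
  fix x :: 'm assume "x \<in> {0}"
  then show "x \<in> Pp p \<inter> range (sc deps)"
    by (auto simp: Pp_def crs_def intro: image_eqI[of _ _ 0])
qed

lemma Pp_Esp: "Pp p \<in> Esp sc sp"
  unfolding Esp_def using Pp_subspace Pp_dim Pp_Du Pp_eps by auto


lemma Esp_inj:
  assumes P: "P \<in> Esp sc sp" and x: "x \<in> P" and y: "y \<in> P" and e: "\<And>k. k < 3 \<Longrightarrow> rc x k = rc y k"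
  shows "x = y"
proof -
  have sub: "R.subspace P" and eps: "P \<inter> range (sc deps) = {0}" using P by (auto simp: Esp_def)
  have "x - y \<in> P" using R.subspace_diff[OF sub x y] .
  moreover have "x - y \<in> range (sc deps)" using e by (simp add: epsM_iff)
  ultimately have "x - y \<in> {0}" using eps by blast
  then show ?thesis by simp
qed

lemma Esp_lift:
  assumes P: "P \<in> Esp sc sp"
  shows "\<exists>x\<in>P. \<forall>k<3. rc x k = r k"
proof -
  have sub: "R.subspace P" and d3: "R.dim P = 3" using P by (auto simp: Esp_def)
  define f :: "'m \<Rightarrow> real \<times> real \<times> real" where "f x = (rc x 0, rc x 1, rc x 2)" for x
  have hom: "module_hom (rscale sc) scaleR f"
    unfolding module_hom_iff
  proof (intro conjI allI)
    show "module (rscale sc)" using vsR by (simp add: module_iff_vector_space)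
    show "module ((*\<^sub>R) :: real \<Rightarrow> real \<times> real \<times> real \<Rightarrow> _)"
      by (simp add: module_def scaleR_add_right scaleR_add_left)
    show "f (x + y) = f x + f y" for x y by (simp add: f_def)
    show "f (rscale sc c x) = c *\<^sub>R f x" for c x by (simp add: f_def)
  qed
  obtain B where B: "B \<subseteq> P" "R.independent B" "P \<subseteq> R.span B" "card B = R.dim P"
    using R.basis_exists[of P] by blast
  have spB: "R.span B = P" using R.span_minimal[OF B(1) sub] B(3) by blast
  have injP: "inj_on f P"
  proof (rule inj_onI)
    fix x y assume x: "x \<in> P" and y: "y \<in> P" and fe: "f x = f y"
    show "x = y"
      by (rule Esp_inj[OF P x y]) (use fe in \<open>auto simp: f_def dest!: lt3\<close>)
  qed
  then have injB: "inj_on f (R.span B)" using spB by simp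
  have ind: "\<not> module.dependent scaleR (f ` B)"
    by (rule module_hom.independent_injective_image[OF hom B(2) injB])
  have cB: "card B = 3" using B(4) d3 by simp
  then have finB: "finite B" by (metis card.infinite zero_neq_numeral)
  have cfB: "card (f ` B) = 3"
    using card_image[OF inj_on_subset[OF injP B(1)]] cB by simp
  have "UNIV \<subseteq> span (f ` B)"
    using card_eq_dim[of "f ` B" UNIV] cfB finB ind by (simp add: dependent_raw_def)
  also have "span (f ` B) = f ` P"
    using module_hom.span_image[OF hom, of B] spB by (simp add: span_raw_def)
  finally have "(r 0, r 1, r 2) \<in> f ` P" by blast
  then obtain x where x: "x \<in> P" "f x = (r 0, r 1, r 2)" by (metis imageE)
  then have "\<forall>k<3. rc x k = r k" by (auto simp: f_def dest!: lt3)
  then show ?thesis using x by blast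
qed

lemma Esp_Pp:
  assumes P: "P \<in> Esp sc sp"
  shows "\<exists>p. P = Pp p \<and> (\<forall>k\<ge>3. p k = 0)"
proof -
  have sub: "R.subspace P" and orth: "\<And>x y. x \<in> P \<Longrightarrow> y \<in> P \<Longrightarrow> dDu (sp x y) = 0"
    using P by (auto simp: Esp_def)
  obtain x0 where x0: "x0 \<in> P" "\<forall>k<3. rc x0 k = ee 0 k" using Esp_lift[OF P] by blast
  obtain x1 where x1: "x1 \<in> P" "\<forall>k<3. rc x1 k = ee 1 k" using Esp_lift[OF P] by blast
  obtain x2 where x2: "x2 \<in> P" "\<forall>k<3. rc x2 k = ee 2 k" using Esp_lift[OF P] by blast
  have r0: "rc x0 0 = 1" "rc x0 (Suc 0) = 0" "rc x0 2 = 0" using x0 by (auto simp: ee_def)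
  have r1: "rc x1 0 = 0" "rc x1 (Suc 0) = 1" "rc x1 2 = 0" using x1 by (auto simp: ee_def)
  have r2: "rc x2 0 = 0" "rc x2 (Suc 0) = 0" "rc x2 2 = 1" using x2 by (auto simp: ee_def)
  have du: "dDu (sp a b) = (\<Sum>k<3. rc a k * dc b k + dc a k * rc b k)" for a b
    by (simp add: parseval dDu_sum co_split)
  have a00: "dc x0 0 = 0" using orth[OF x0(1) x0(1)] by (simp add: du sum3 r0)
  have a11: "dc x1 (Suc 0) = 0" using orth[OF x1(1) x1(1)] by (simp add: du sum3 r1)
  have a22: "dc x2 2 = 0" using orth[OF x2(1) x2(1)] by (simp add: du sum3 r2)
  have a01: "dc x0 (Suc 0) = - dc x1 0" using orth[OF x0(1) x1(1)] by (simp add: du sum3 r0 r1)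
  have a02: "dc x0 2 = - dc x2 0" using orth[OF x0(1) x2(1)] by (simp add: du sum3 r0 r2)
  have a12: "dc x1 2 = - dc x2 (Suc 0)" using orth[OF x1(1) x2(1)] by (simp add: du sum3 r1 r2)
  define p where "p = (\<lambda>k::nat. if k = 0 then dc x1 2 else if k = 1 then dc x2 0 else if k = 2 then dc x0 1 else 0)"
  have comb: "x = rscale sc (rc x 0) x0 + rscale sc (rc x 1) x1 + rscale sc (rc x 2) x2" if x: "x \<in> P" for x
  proof (rule Esp_inj[OF P x])
    show "rscale sc (rc x 0) x0 + rscale sc (rc x 1) x1 + rscale sc (rc x 2) x2 \<in> P"
      using x0(1) x1(1) x2(1) sub by (intro R.subspace_add R.subspace_scale) auto
    show "rc x k = rc (rscale sc (rc x 0) x0 + rscale sc (rc x 1) x1 + rscale sc (rc x 2) x2) k" if "k < 3" for k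
      using that by (auto simp: r0 r1 r2 dest!: lt3)
  qed
  have PinPp: "x \<in> Pp p" if x: "x \<in> P" for x
  proof -
    have "dc x j = dc (rscale sc (rc x 0) x0 + rscale sc (rc x 1) x1 + rscale sc (rc x 2) x2) j" for j
      using comb[OF x] by metis
    then show ?thesis
      unfolding Pp_def using a00 a11 a22 a01 a02 a12
      by (auto simp: p_def algebra_simps dest!: lt3)
  qed
  have "P = Pp p"
  proof
    show "P \<subseteq> Pp p" using PinPp by blast
    show "Pp p \<subseteq> P"
    proof
      fix y assume y: "y \<in> Pp p"
      define x where "x = rscale sc (rc y 0) x0 + rscale sc (rc y 1) x1 + rscale sc (rc y 2) x2"
      have xP: "x \<in> P" unfolding x_def
        using x0(1) x1(1) x2(1) sub by (intro R.subspace_add R.subspace_scale) auto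
      have rr: "rc x k = rc y k" if "k < 3" for k
        using that by (auto simp: x_def r0 r1 r2 dest!: lt3)
      have "x = y"
      proof (rule rc_dc_ext)
        show "rc x k = rc y k" if "k < 3" for k using rr that .
        show "dc x k = dc y k" if k: "k < 3" for k
        proof -
          have "dc x k = crs p (rc x) k" using PinPp[OF xP] k by (simp add: Pp_def)
          also have "\<dots> = crs p (rc y) k" using rr k by (intro crs_cong) auto
          also have "\<dots> = dc y k" using y k by (simp add: Pp_def)
          finally show ?thesis .
        qed
      qed
      then show "y \<in> P" using xP by simp
    qed
  qed
  moreover have "\<forall>k\<ge>3. p k = 0" by (simp add: p_def)
  ultimately show ?thesis by blast
qed

lemma Esp_iff: "P \<in> Esp sc sp \<longleftrightarrow> (\<exists>p. P = Pp p)"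
  using Esp_Pp Pp_Esp by blast


lemma Pp_cong: "(\<And>k. k < 3 \<Longrightarrow> p k = q k) \<Longrightarrow> Pp p = Pp q"
proof -
  assume h: "\<And>k. k < 3 \<Longrightarrow> p k = q k"
  have "crs p r j = crs q r j" if "j < 3" for r j by (rule crs_cong) (use h that in auto)
  then show ?thesis by (auto simp: Pp_def)
qed

lemma fr_cong: "(\<And>k. k < 3 \<Longrightarrow> r k = s k) \<Longrightarrow> fr p r = fr p s"
  by (rule rc_dc_ext) (auto simp: rc_fr dc_fr intro!: crs_cong)

lemma lift_Pp: "lift sc (Pp p) (vmk r) = fr p r"
  unfolding lift_def
proof (rule the_equality)
  show "fr p r \<in> Pp p \<and> qproj sc (fr p r) = vmk r"
    by (simp add: fr_in qproj_vmk vmk_eq_iff rc_fr)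
  fix x assume x: "x \<in> Pp p \<and> qproj sc x = vmk r"
  then have "x = fr p (rc x)" using Pp_fr by blast
  also have "\<dots> = fr p r" using x by (intro fr_cong) (simp add: qproj_vmk vmk_eq_iff)
  finally show "x = fr p r" .
qed

lemma lift_ebas: "i < 3 \<Longrightarrow> lift sc (Pp p) (ebas sc sp OR i) = fr p (ee i)"
  by (simp add: ebas_eq lift_Pp ee_def[symmetric])

lemma co_fr: "l < 3 \<Longrightarrow> co (fr p r) l = Dual (r l) (crs p r l)"
  by (simp add: fr_def co_lin)

lemma co_Ediff_rhs:
  assumes i: "i < 3" and l: "l < 3"
  shows "co (fr p (ee i) + (\<Sum>j<3. \<Sum>k<3. sc (deps * dreal (levi i j k * d k)) (fr p (ee j)))) l
     = Dual (ee i l) (crs p (ee i) l + (\<Sum>k<3. levi i l k * d k))"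
  using i l by (auto simp: co_fr sum3 dual_eq_iff ee_def levi_def dest!: lt3)

lemma Ediff_Pp: "Ediff sc sp OR (Pp q) (Pp p) = vmk (\<lambda>k. q k - p k)"
proof -
  define C where "C d \<longleftrightarrow> (\<forall>k\<ge>3. d k = 0) \<and> (\<forall>i<3. lift sc (Pp q) (ebas sc sp OR i) =
     lift sc (Pp p) (ebas sc sp OR i) + (\<Sum>j<3. \<Sum>k<3. sc (deps * dreal (levi i j k * d k))
        (lift sc (Pp p) (ebas sc sp OR j))))" for d
  have C_iff: "C d \<longleftrightarrow> (\<forall>k\<ge>3. d k = 0) \<and>
     (\<forall>i<3. \<forall>l<3. crs q (ee i) l = crs p (ee i) l + (\<Sum>k<3. levi i l k * d k))" for d
  proof -
    have "(\<forall>i<3. lift sc (Pp q) (ebas sc sp OR i) =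
     lift sc (Pp p) (ebas sc sp OR i) + (\<Sum>j<3. \<Sum>k<3. sc (deps * dreal (levi i j k * d k))
        (lift sc (Pp p) (ebas sc sp OR j)))) \<longleftrightarrow>
       (\<forall>i<3. fr q (ee i) = fr p (ee i) + (\<Sum>j<3. \<Sum>k<3. sc (deps * dreal (levi i j k * d k)) (fr p (ee j))))"
      by (simp add: lift_ebas)
    also have "\<dots> \<longleftrightarrow> (\<forall>i<3. \<forall>l<3. crs q (ee i) l = crs p (ee i) l + (\<Sum>k<3. levi i l k * d k))"
      unfolding co_eq_iff by (simp add: co_Ediff_rhs co_fr dual_eq_iff del: co_simps dreal_simps)
    finally show ?thesis unfolding C_def by simp
  qed
  define d0 where "d0 = (\<lambda>k::nat. if k < 3 then q k - p k else 0)"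
  have "(THE d. C d) = d0"
  proof (rule the_equality)
    show "C d0" unfolding C_iff d0_def
      by (auto simp: sum3 levi_def ee_def crs_def dest!: lt3)
  next
    fix d assume "C d"
    then have z: "\<forall>k\<ge>3. d k = 0" and e: "\<forall>i<3. \<forall>l<3. crs q (ee i) l = crs p (ee i) l + (\<Sum>k<3. levi i l k * d k)"
      unfolding C_iff by auto
    have "d 0 = q 0 - p 0" using e[rule_format, of 1 2] by (simp add: sum3 ee_def levi_def)
    moreover have "d 1 = q 1 - p 1" using e[rule_format, of 2 0] by (simp add: sum3 ee_def levi_def)
    moreover have "d 2 = q 2 - p 2" using e[rule_format, of 0 1] by (simp add: sum3 ee_def levi_def)
    ultimately show "d = d0" using z unfolding d0_def by (auto simp: fun_eq_iff dest!: lt3)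
  qed
  then show ?thesis
    unfolding Ediff_def C_def[symmetric] vlin_eq by (intro vmk_cong) (simp add: d0_def)
qed

lemma Eplus_Pp: "v \<in> Vsp sc \<Longrightarrow> Eplus sc sp OR (Pp p) v = Pp (\<lambda>k. p k + vco v k)"
  unfolding Eplus_def
proof (rule the_equality)
  assume v: "v \<in> Vsp sc"
  show "Pp (\<lambda>k. p k + vco v k) \<in> Esp sc sp \<and> Ediff sc sp OR (Pp (\<lambda>k. p k + vco v k)) (Pp p) = v"
    using Vsp_vmk[OF v] by (simp add: Pp_Esp Ediff_Pp)
  fix Q assume Q: "Q \<in> Esp sc sp \<and> Ediff sc sp OR Q (Pp p) = v"
  then obtain q where q: "Q = Pp q" using Esp_Pp by blast
  then have "vmk (\<lambda>k. q k - p k) = vmk (vco v)" using Q Vsp_vmk[OF v] by (simp add: Ediff_Pp)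
  then have h: "\<forall>k<3. q k - p k = vco v k" by (simp add: vmk_eq_iff)
  have "q k = p k + vco v k" if "k < 3" for k
  proof -
    have "q k - p k = vco v k" using h that by blast
    then show ?thesis by linarith
  qed
  then show "Q = Pp (\<lambda>k. p k + vco v k)" unfolding q by (rule Pp_cong)
qed

lemma beta_Pp: "beta sc sp z (Pp p) = vmk (\<lambda>k. dc z k - crs p (rc z) k)"
proof -
  have "(THE v. v \<in> Vsp sc \<and> (\<exists>a\<in>Pp p. \<exists>y. qproj sc y = v \<and> z = a + sc deps y))
      = vmk (\<lambda>k. dc z k - crs p (rc z) k)"
  proof (rule the_equality)
    define y where "y = lin mb (\<lambda>k. dreal (dc z k - crs p (rc z) k))"
    have ry: "rc y k = dc z k - crs p (rc z) k" if "k < 3" for k using that by (simp add: y_def rc_def co_lin)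
    have "z = fr p (rc z) + sc deps y"
      by (rule rc_dc_ext) (simp_all add: rc_fr dc_fr rc_sc ry)
    moreover have "qproj sc y = vmk (\<lambda>k. dc z k - crs p (rc z) k)"
      by (simp add: qproj_vmk vmk_eq_iff ry)
    ultimately show "vmk (\<lambda>k. dc z k - crs p (rc z) k) \<in> Vsp sc \<and>
      (\<exists>a\<in>Pp p. \<exists>y. qproj sc y = vmk (\<lambda>k. dc z k - crs p (rc z) k) \<and> z = a + sc deps y)"
      using fr_in vmk_Vsp by blast
  next
    fix v assume "v \<in> Vsp sc \<and> (\<exists>a\<in>Pp p. \<exists>y. qproj sc y = v \<and> z = a + sc deps y)"
    then obtain a y where a: "a \<in> Pp p" and v: "v = qproj sc y" and z: "z = a + sc deps y" by auto
    have ra: "rc a k = rc z k" if "k < 3" for k using z by (simp add: rc_sc)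
    have "rc y k = dc z k - crs p (rc z) k" if k: "k < 3" for k
    proof -
      have "dc z k = dc a k + rc y k" using z by (simp add: rc_sc)
      moreover have "dc a k = crs p (rc a) k" using a k by (simp add: Pp_def)
      moreover have "crs p (rc a) k = crs p (rc z) k" using ra k by (intro crs_cong) auto
      ultimately show ?thesis by simp
    qed
    then show "v = vmk (\<lambda>k. dc z k - crs p (rc z) k)" by (simp add: v qproj_vmk vmk_eq_iff)
  qed
  then show ?thesis by (simp add: beta_def Pp_Esp)
qed


section \<open>so(3,D)\<close>

lemma co_adx: "k < 3 \<Longrightarrow> co (adx sc sp OR x y) k = - dcrs (co x) (co y) k"
  by (simp add: adx_def co_dcross)

lemma co_dcross_simps[simp]:
  "co (dcross sc sp OR x y) 0 = co x 1 * co y 2 - co x 2 * co y 1"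
  "co (dcross sc sp OR x y) (Suc 0) = co x 2 * co y 0 - co x 0 * co y 2"
  "co (dcross sc sp OR x y) 2 = co x 0 * co y 1 - co x 1 * co y 0"
  by (simp_all add: co_dcross)

lemma co_adx_simps[simp]:
  "co (adx sc sp OR x y) 0 = - (co x 1 * co y 2 - co x 2 * co y 1)"
  "co (adx sc sp OR x y) (Suc 0) = - (co x 2 * co y 0 - co x 0 * co y 2)"
  "co (adx sc sp OR x y) 2 = - (co x 0 * co y 1 - co x 1 * co y 0)"
  by (simp_all add: co_adx)

lemma adx_lin: "adx sc sp OR x (sc a u + v) = sc a (adx sc sp OR x u) + adx sc sp OR x v"
  by (rule co_ext) (auto simp: algebra_simps dest!: lt3)

lemma adx_antisym: "sp (adx sc sp OR x u) w = - sp u (adx sc sp OR x w)"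
  by (simp add: parseval sum3 algebra_simps)

lemma adx_so3: "adx sc sp OR x \<in> so3 sc sp"
  unfolding so3_def using adx_lin adx_antisym by blast

lemma adx_inj: "inj (adx sc sp OR)"
proof (rule injI)
  fix x y assume e: "adx sc sp OR x = adx sc sp OR y"
  have c: "co (adx sc sp OR x (mb j)) k = co (adx sc sp OR y (mb j)) k" for j k using e by simp
  have m: "co (mb j) k = (if j = k then 1 else 0)" if "j < 3" "k < 3" for j k using co_mb that by simp
  have m0: "co (mb 0) 0 = 1" "co (mb 0) (Suc 0) = 0" "co (mb 0) 2 = 0" using m by auto
  have m1: "co (mb (Suc 0)) 0 = 0" "co (mb (Suc 0)) (Suc 0) = 1" "co (mb (Suc 0)) 2 = 0" using m by auto
  have m2: "co (mb 2) 0 = 0" "co (mb 2) (Suc 0) = 0" "co (mb 2) 2 = 1" using m by auto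
  have "co x 0 = co y 0" using c[of 2 1] by (simp add: m2)
  moreover have "co x 1 = co y 1" using c[of 0 2] by (simp add: m0)
  moreover have "co x 2 = co y 2" using c[of 1 0] by (simp add: m1)
  ultimately show "x = y" by (intro co_ext) (auto dest!: lt3)
qed

lemma so3_lin:
  assumes T: "T \<in> so3 sc sp"
  shows "T (x + y) = T x + T y" "T (sc a x) = sc a (T x)"
proof -
  have l: "T (sc a x + y) = sc a (T x) + T y" for a x y using T by (simp add: so3_def)
  have z: "T 0 = 0" using l[of 1 0 0] by simp
  show "T (x + y) = T x + T y" using l[of 1 x y] by simp
  show "T (sc a x) = sc a (T x)" using l[of a x 0] z by simp
qed

lemma adx_surj:
  assumes T: "T \<in> so3 sc sp"
  shows "\<exists>x. T = adx sc sp OR x"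
proof -
  have as: "sp (T x) y = - sp x (T y)" for x y using T by (simp add: so3_def)
  define t where "t i j = co (T (mb i)) j" for i j
  have tanti: "t i j = - t j i" for i j
    unfolding t_def co_def using as[of "mb i" "mb j"] sp_sym[of "mb i" "T (mb j)"] by simp
  have tdiag: "t i i = 0" for i using tanti[of i i] by (simp add: dual_eq_iff)
  define x where "x = lin mb (\<lambda>k. if k = 0 then t 2 1 else if k = 1 then t 0 2 else t 1 0)"
  have cx: "co x 0 = t 2 1" "co x (Suc 0) = t 0 2" "co x 2 = t 1 0" by (simp_all add: x_def co_lin)
  have Ty: "T y = sc (co y 0) (T (mb 0)) + sc (co y 1) (T (mb 1)) + sc (co y 2) (T (mb 2))" for y
  proof -
    have "T y = T (lin mb (co y))" using expand by simp
    also have "\<dots> = sc (co y 0) (T (mb 0)) + sc (co y 1) (T (mb 1)) + sc (co y 2) (T (mb 2))"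
      by (simp add: lin_def sum3 so3_lin[OF T])
    finally show ?thesis .
  qed
  have "T = adx sc sp OR x"
  proof
    fix y
    have cT: "co (T y) k = co y 0 * t 0 k + co y 1 * t 1 k + co y 2 * t 2 k" for k
      by (subst Ty) (simp add: t_def)
    show "T y = adx sc sp OR x y"
    proof (rule co_ext)
      fix k :: nat assume "k < 3"
      then show "co (T y) k = co (adx sc sp OR x y) k"
        using tanti[of 0 1] tanti[of 0 2] tanti[of 1 2] tdiag[of 0] tdiag[of 1] tdiag[of 2]
        by (auto simp: cT cx algebra_simps dest!: lt3)
    qed
  qed
  then show ?thesis by blast
qed

lemma adx_bij: "bij_betw (adx sc sp OR) UNIV (so3 sc sp)"
proof -
  have "range (adx sc sp OR) = so3 sc sp" using adx_so3 adx_surj by blast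
  then show ?thesis unfolding bij_betw_def using adx_inj by simp
qed

lemma adx_linear: "adx sc sp OR (sc a x + y) = (\<lambda>z. sc a (adx sc sp OR x z) + adx sc sp OR y z)"
proof
  fix z show "adx sc sp OR (sc a x + y) z = sc a (adx sc sp OR x z) + adx sc sp OR y z"
    by (rule co_ext) (auto simp: algebra_simps dest!: lt3)
qed

lemma adx_bracket: "adx sc sp OR (- dcross sc sp OR x y) = op_comm (adx sc sp OR x) (adx sc sp OR y)"
proof
  fix z
  have cd: "co (- dcross sc sp OR x y) k = - dcrs (co x) (co y) k" if "k < 3" for k
    using that by (simp add: co_dcross)
  show "adx sc sp OR (- dcross sc sp OR x y) z = op_comm (adx sc sp OR x) (adx sc sp OR y) z"
    unfolding op_comm_def
    by (rule co_ext) (auto simp: cd algebra_simps dest!: lt3)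
qed


section \<open>Screw fields\<close>

lemma vco_beta: "k < 3 \<Longrightarrow> vco (beta sc sp z (Pp p)) k = dc z k - crs p (rc z) k"
  by (simp add: beta_Pp vco_vmk)

lemma beta_out: "P \<notin> Esp sc sp \<Longrightarrow> beta sc sp z P = undefined"
  by (simp add: beta_def)

lemma beta_Vsp: "P \<in> Esp sc sp \<Longrightarrow> beta sc sp z P \<in> Vsp sc"
  using Esp_Pp[of P] by (auto simp: beta_Pp vmk_Vsp)

lemma vsub_vmk: "vsub sc (vmk a) (vmk b) = vmk (\<lambda>k. a k - b k)"
  by (simp add: vsub_eq vmk_eq_iff vco_vmk)

lemma beta_se3: "beta sc sp z \<in> se3 sc sp OR"
  unfolding se3_def
proof (intro CollectI conjI allI impI ballI bexI)
  show "beta sc sp z P = undefined" if "P \<notin> Esp sc sp" for P using that by (rule beta_out)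
  show "beta sc sp z P \<in> Vsp sc" if "P \<in> Esp sc sp" for P using that by (rule beta_Vsp)
  show "qproj sc z \<in> Vsp sc" by (simp add: Vsp_def)
  fix P Q assume P: "P \<in> Esp sc sp" and Q: "Q \<in> Esp sc sp"
  obtain p where p: "P = Pp p" using Esp_Pp[OF P] by blast
  obtain q where q: "Q = Pp q" using Esp_Pp[OF Q] by blast
  have "vsub sc (beta sc sp z Q) (beta sc sp z P) = vmk (\<lambda>k. (dc z k - crs q (rc z) k) - (dc z k - crs p (rc z) k))"
    by (simp add: p q beta_Pp vsub_vmk)
  also have "\<dots> = vcross sc sp OR (qproj sc z) (Ediff sc sp OR Q P)"
    unfolding vcross_eq p q Ediff_Pp
    by (rule vmk_cong) (auto simp: vco_vmk vco_qproj algebra_simps dest!: lt3)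
  finally show "vsub sc (beta sc sp z Q) (beta sc sp z P) = vcross sc sp OR (qproj sc z) (Ediff sc sp OR Q P)" .
qed

lemma beta_inj: "inj (beta sc sp)"
proof (rule injI)
  fix x y assume e: "beta sc sp x = beta sc sp y"
  have h: "dc x k - crs p (rc x) k = dc y k - crs p (rc y) k" if "k < 3" for p k
  proof -
    have "beta sc sp x (Pp p) = beta sc sp y (Pp p)" using e by simp
    then show ?thesis using that by (simp add: beta_Pp vmk_eq_iff)
  qed
  have cz: "crs (\<lambda>_::nat. 0::real) r k = 0" for r k by (simp add: crs_def)
  have d: "dc x k = dc y k" if "k < 3" for k using h[of k "\<lambda>_::nat. 0::real"] that by (simp only: cz) simp
  have "rc x 2 = rc y 2" using h[of 1 "ee 0"] d[of 1] by (simp add: ee_def)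
  moreover have "rc x 1 = rc y 1" using h[of 2 "ee 0"] d[of 2] by (simp add: ee_def)
  moreover have "rc x 0 = rc y 0" using h[of 2 "ee 1"] d[of 2] by (simp add: ee_def)
  ultimately show "x = y" using d by (intro rc_dc_ext) (auto dest!: lt3)
qed

lemma beta_surj:
  assumes s: "s \<in> se3 sc sp OR"
  shows "\<exists>z. s = beta sc sp z"
proof -
  from s obtain w where w: "w \<in> Vsp sc"
    and sc3: "\<And>P Q. P \<in> Esp sc sp \<Longrightarrow> Q \<in> Esp sc sp \<Longrightarrow> vsub sc (s Q) (s P) = vcross sc sp OR w (Ediff sc sp OR Q P)"
    and out: "\<And>P. P \<notin> Esp sc sp \<Longrightarrow> s P = undefined"
    and inV: "\<And>P. P \<in> Esp sc sp \<Longrightarrow> s P \<in> Vsp sc"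
    unfolding se3_def by blast
  define z0 where "z0 = (\<lambda>_::nat. 0::real)"
  define s0 where "s0 = s (Pp z0)"
  define z where "z = lin mb (\<lambda>k. Dual (vco w k) (vco s0 k))"
  have rz: "rc z k = vco w k" and dz: "dc z k = vco s0 k" if "k < 3" for k
    using that by (simp_all add: z_def rc_def dc_def co_lin)
  have "s P = beta sc sp z P" for P
  proof (cases "P \<in> Esp sc sp")
    case False then show ?thesis by (simp add: out beta_out)
  next
    case True
    then obtain p where p: "P = Pp p" using Esp_Pp by blast
    have e: "vsub sc (s (Pp p)) s0 = vcross sc sp OR w (Ediff sc sp OR (Pp p) (Pp z0))"
      unfolding s0_def using sc3[OF Pp_Esp Pp_Esp] .
    have "vco (s (Pp p)) k - vco s0 k = crs (vco w) p k" if "k < 3" for k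
    proof -
      have "vmk (\<lambda>k. vco (s (Pp p)) k - vco s0 k) = vmk (crs (vco w) (vco (vmk (\<lambda>k. p k - z0 k))))"
        using e by (simp add: vsub_eq vcross_eq Ediff_Pp)
      then have "vco (s (Pp p)) k - vco s0 k = crs (vco w) (vco (vmk (\<lambda>k. p k - z0 k))) k"
        using that by (simp add: vmk_eq_iff)
      also have "\<dots> = crs (vco w) p k" using that by (intro crs_cong) (auto simp: vco_vmk z0_def)
      finally show ?thesis .
    qed
    then have "vco (s (Pp p)) k = dc z k - crs p (rc z) k" if "k < 3" for k
      using that rz dz by (auto simp: algebra_simps dest!: lt3)
    then have "vmk (vco (s (Pp p))) = beta sc sp z (Pp p)" by (simp add: beta_Pp vmk_eq_iff)
    then show ?thesis using Vsp_vmk[OF inV[OF Pp_Esp]] p by simp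
  qed
  then show ?thesis by blast
qed

lemma beta_bij: "bij_betw (beta sc sp) UNIV (se3 sc sp OR)"
proof -
  have "range (beta sc sp) = se3 sc sp OR" using beta_se3 beta_surj by blast
  then show ?thesis unfolding bij_betw_def using beta_inj by simp
qed

lemma vinner_ebas: "k < 3 \<Longrightarrow> vinner sp u (ebas sc sp OR k) = vco u k"
  by (auto simp: vinner_eq ebas_eq vco_vmk sum3 dest!: lt3)

lemma vderiv_beta:
  assumes v: "v \<in> Vsp sc"
  shows "vderiv sc sp OR (beta sc sp z) (Pp p) v = vmk (crs (rc z) (vco v))"
  unfolding vderiv_def vlin_eq
proof (rule vmk_cong)
  fix k :: nat assume k: "k < 3"
  have vs: "vscale sc t v \<in> Vsp sc" for t by (simp add: vscale_eq vmk_Vsp)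
  have ep: "Eplus sc sp OR (Pp p) (vscale sc t v) = Pp (\<lambda>j. p j + t * vco v j)" for t
    unfolding Eplus_Pp[OF vs] by (rule Pp_cong) (simp add: vscale_eq vco_vmk)
  have f: "(\<lambda>t. vinner sp (beta sc sp z (Eplus sc sp OR (Pp p) (vscale sc t v))) (ebas sc sp OR k))
     = (\<lambda>t. (dc z k - crs p (rc z) k) + t * crs (rc z) (vco v) k)"
  proof
    fix t
    show "vinner sp (beta sc sp z (Eplus sc sp OR (Pp p) (vscale sc t v))) (ebas sc sp OR k)
       = (dc z k - crs p (rc z) k) + t * crs (rc z) (vco v) k"
      unfolding ep vinner_ebas[OF k] vco_beta[OF k]
      using k by (auto simp: algebra_simps dest!: lt3)
  qed
  have "deriv (\<lambda>t. (dc z k - crs p (rc z) k) + t * crs (rc z) (vco v) k) 0 = crs (rc z) (vco v) k"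
    by (rule DERIV_imp_deriv) (auto intro!: derivative_eq_intros)
  then show "deriv (\<lambda>t. vinner sp (beta sc sp z (Eplus sc sp OR (Pp p) (vscale sc t v))) (ebas sc sp OR k)) 0
     = crs (rc z) (vco v) k"
    unfolding f .
qed

lemma beta_bracket: "beta sc sp (- dcross sc sp OR x y) = vf_bracket sc sp OR (beta sc sp x) (beta sc sp y)"
proof
  fix P
  show "beta sc sp (- dcross sc sp OR x y) P = vf_bracket sc sp OR (beta sc sp x) (beta sc sp y) P"
  proof (cases "P \<in> Esp sc sp")
    case False then show ?thesis by (simp add: beta_out vf_bracket_def)
  next
    case True
    then obtain p where p: "P = Pp p" using Esp_Pp by blast
    have "vf_bracket sc sp OR (beta sc sp x) (beta sc sp y) P
      = vmk (\<lambda>k. crs (rc y) (vco (beta sc sp x (Pp p))) k - crs (rc x) (vco (beta sc sp y (Pp p))) k)"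
      by (simp add: vf_bracket_def p Pp_Esp vderiv_beta beta_Vsp vsub_vmk)
    also have "\<dots> = beta sc sp (- dcross sc sp OR x y) P"
      unfolding p beta_Pp
      by (rule vmk_cong) (auto simp: vco_vmk rc_dcross dc_dcross algebra_simps dest!: lt3)
    finally show ?thesis by simp
  qed
qed

lemma beta_lin:
  assumes P: "P \<in> Esp sc sp"
  shows "beta sc sp (sc (dreal r) x + y) P = vadd sc (vscale sc r (beta sc sp x P)) (beta sc sp y P)"
proof -
  obtain p where p: "P = Pp p" using Esp_Pp[OF P] by blast
  have vv: "vco (vscale sc r u) k = r * vco u k" if "k < 3" for u k
    using that by (simp add: vscale_eq vco_vmk)
  show ?thesis
    unfolding p vadd_eq beta_Pp
    by (rule vmk_cong) (auto simp: vv vco_vmk rc_sc algebra_simps dest!: lt3)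
qed

end

theorem proposition8:
  fixes sc :: "dual \<Rightarrow> 'm::ab_group_add \<Rightarrow> 'm"
    and sp :: "'m \<Rightarrow> 'm \<Rightarrow> dual"
    and OR :: "(nat \<Rightarrow> 'm) set"
  assumes "dmod3 sc sp OR"
  shows "bij_betw (adx sc sp OR) UNIV (so3 sc sp)
    \<and> (\<forall>a x y. adx sc sp OR (sc a x + y) = (\<lambda>z. sc a (adx sc sp OR x z) + adx sc sp OR y z))
    \<and> (\<forall>x y. adx sc sp OR (- dcross sc sp OR x y) = op_comm (adx sc sp OR x) (adx sc sp OR y))
    \<and> bij_betw (beta sc sp \<circ> inv_into UNIV (adx sc sp OR)) (so3 sc sp) (se3 sc sp OR)
    \<and> (\<forall>T\<in>so3 sc sp. \<forall>S\<in>so3 sc sp.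
          (beta sc sp \<circ> inv_into UNIV (adx sc sp OR)) (op_comm T S)
          = vf_bracket sc sp OR ((beta sc sp \<circ> inv_into UNIV (adx sc sp OR)) T)
                                ((beta sc sp \<circ> inv_into UNIV (adx sc sp OR)) S))
    \<and> (\<forall>r. \<forall>T\<in>so3 sc sp. \<forall>S\<in>so3 sc sp. \<forall>P\<in>Esp sc sp.
          (beta sc sp \<circ> inv_into UNIV (adx sc sp OR)) (\<lambda>x. sc (dreal r) (T x) + S x) P
          = vadd sc (vscale sc r ((beta sc sp \<circ> inv_into UNIV (adx sc sp OR)) T P))
                    ((beta sc sp \<circ> inv_into UNIV (adx sc sp OR)) S P))"
proof -
  interpret D3 sc sp OR by unfold_locales (rule assms)
  have inv: "inv_into UNIV (adx sc sp OR) (adx sc sp OR z) = z" for z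
    by (rule inv_into_f_f[OF adx_inj]) simp
  have Tz: "\<exists>z. T = adx sc sp OR z" if "T \<in> so3 sc sp" for T
    using adx_surj[OF that] .
  have c4: "bij_betw (beta sc sp \<circ> inv_into UNIV (adx sc sp OR)) (so3 sc sp) (se3 sc sp OR)"
    by (rule bij_betw_trans[OF bij_betw_inv_into[OF adx_bij] beta_bij])
  have c5: "(beta sc sp \<circ> inv_into UNIV (adx sc sp OR)) (op_comm T S)
          = vf_bracket sc sp OR ((beta sc sp \<circ> inv_into UNIV (adx sc sp OR)) T)
                                ((beta sc sp \<circ> inv_into UNIV (adx sc sp OR)) S)"
    if T: "T \<in> so3 sc sp" and S: "S \<in> so3 sc sp" for T S
  proof -
    obtain z1 where z1: "T = adx sc sp OR z1" using Tz[OF T] by blast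
    obtain z2 where z2: "S = adx sc sp OR z2" using Tz[OF S] by blast
    have "op_comm T S = adx sc sp OR (- dcross sc sp OR z1 z2)" by (simp add: z1 z2 adx_bracket)
    then show ?thesis by (simp add: z1 z2 inv beta_bracket)
  qed
  have c6: "(beta sc sp \<circ> inv_into UNIV (adx sc sp OR)) (\<lambda>x. sc (dreal r) (T x) + S x) P
          = vadd sc (vscale sc r ((beta sc sp \<circ> inv_into UNIV (adx sc sp OR)) T P))
                    ((beta sc sp \<circ> inv_into UNIV (adx sc sp OR)) S P)"
    if T: "T \<in> so3 sc sp" and S: "S \<in> so3 sc sp" and P: "P \<in> Esp sc sp" for r T S P
  proof -
    obtain z1 where z1: "T = adx sc sp OR z1" using Tz[OF T] by blast
    obtain z2 where z2: "S = adx sc sp OR z2" using Tz[OF S] by blast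
    have "(\<lambda>x. sc (dreal r) (T x) + S x) = adx sc sp OR (sc (dreal r) z1 + z2)"
      by (simp add: z1 z2 adx_linear)
    then show ?thesis by (simp add: z1 z2 inv beta_lin[OF P])
  qed
  show ?thesis
    using adx_bij adx_linear adx_bracket c4 c5 c6 by blast
qed

end
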